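(* Let $X$ be a countable set with at least two elements, equipped with the discrete metric $\rho$, and denote this metric space by $\mathcal{X}$. Let $p\in(0,\infty)$ and let $f:\mathcal{W}_p(\mathcal{X})\to\mathcal{W}_p(\mathcal{X})$ be a surjective isometry (a bijection preserving $W_p$). Then there exists a bijection $\sigma:\mathcal{X}\to\mathcal{X}$ such that $$f(\mu)(\{x\})=\mu(\{\sigma^{-1}(x)\})\qquad\text{for all }x\in\mathcal{X}\text{ and all }\mu\in\mathcal{P}(\mathcal{X}).$$ Conversely, for any bijection $\sigma:\mathcal{X}\to\mathcal{X}$, the map defined by this formula is an isometry of $\mathcal{W}_p(\mathcal{X})$.
   Context: $\rho(x,y)=1$ if $x\ne y$ and $\rho(x,x)=0$. $\mathcal{P}(\mathcal{X})$ is the set of probability measures on the power set of $\mathcal{X}$. A coupling of $\mu,\nu\in\mathcal{P}(\mathcal{X})$ is a probability measure $\pi$ on $\mathcal{X}^2$ with marginals $\mu$ and $\nu$; $\mathcal{C}(\mu,\nu)$ is the set of couplings. $W_p(\mu,\nu)=\big(\inf_{\pi\in\mathcal{C}(\mu,\nu)}\int\rho^p\,d\pi\big)^{1/p}$ for $p\ge1$ and $W_p(\mu,\nu)=\inf_{\pi\in\mathcal{C}(\mu,\nu)}\int\rho^p\,d\pi$ for $0<p<1$. $\mathcal{W}_p(\mathcal{X})$ is the metric space $(\mathcal{P}(\mathcal{X}),W_p)$. *)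

theory Defs
  imports "HOL-Probability.Probability"
begin

definition rho :: "'a \<Rightarrow> 'a \<Rightarrow> real" where
  "rho x y = (if x = y then 0 else 1)"

text \<open>Couplings of two probability measures on a countable set (all such measures are pmfs).\<close>
definition couplings :: "'a pmf \<Rightarrow> 'a pmf \<Rightarrow> ('a \<times> 'a) pmf set" where
  "couplings \<mu> \<nu> = {\<pi>. map_pmf fst \<pi> = \<mu> \<and> map_pmf snd \<pi> = \<nu>}"

definition Wp :: "real \<Rightarrow> 'a pmf \<Rightarrow> 'a pmf \<Rightarrow> real" where
  "Wp p \<mu> \<nu> =
     (let c = (INF \<pi>\<in>couplings \<mu> \<nu>.
                 measure_pmf.expectation \<pi> (\<lambda>(x, y). rho x y powr p))
      in if p \<ge> 1 then c powr (1 / p) else c)"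

end

theory Submission
  imports Defs
begin

definition off :: "('a \<times> 'a) pmf \<Rightarrow> real" where
  "off \<pi> = measure_pmf.prob \<pi> {q. fst q \<noteq> snd q}"

definition cc :: "'a pmf \<Rightarrow> 'a pmf \<Rightarrow> real" where
  "cc \<mu> \<nu> = (INF \<pi>\<in>couplings \<mu> \<nu>. off \<pi>)"

definition FF :: "real \<Rightarrow> real \<Rightarrow> real" where
  "FF p t = (if p \<ge> 1 then t powr (1/p) else t)"

lemma Wp_eq: assumes "p > 0" shows "Wp p \<mu> \<nu> = FF p (cc \<mu> \<nu>)"
proof -
  have "\<And>\<pi> :: ('a \<times> 'a) pmf. measure_pmf.expectation \<pi> (\<lambda>(x, y). rho x y powr p) = off \<pi>"
  proof -
    fix \<pi> :: "('a \<times> 'a) pmf"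
    have eq: "(\<lambda>(x, y). rho x y powr p) = indicator {q. fst q \<noteq> snd q}"
      using assms by (auto simp: rho_def indicator_def fun_eq_iff)
    show "measure_pmf.expectation \<pi> (\<lambda>(x, y). rho x y powr p) = off \<pi>"
      unfolding eq off_def by simp
  qed
  then show ?thesis by (simp add: Wp_def cc_def FF_def)
qed

lemma prob_compl_single: "measure_pmf.prob M (-{a}) = 1 - pmf M a"
proof -
  have "measure_pmf.prob M (space (measure_pmf M) - {a}) = 1 - measure_pmf.prob M {a}"
    by (rule measure_pmf.prob_compl) simp
  moreover have "space (measure_pmf M) - {a} = -{a}" by auto
  ultimately show ?thesis by (simp add: measure_pmf_single)
qed

lemma pair_coupling: "pair_pmf \<mu> \<nu> \<in> couplings \<mu> \<nu>"
  by (simp add: couplings_def map_fst_pair_pmf map_snd_pair_pmf)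

lemma off_bounds: "0 \<le> off \<pi>" "off \<pi> \<le> 1"
  by (simp_all add: off_def)

lemma cc_le: "\<pi> \<in> couplings \<mu> \<nu> \<Longrightarrow> cc \<mu> \<nu> \<le> off \<pi>"
  unfolding cc_def by (rule cInf_lower) (auto intro: bdd_belowI[where m=0] simp: off_bounds)

lemma cc_ge: "(\<And>\<pi>. \<pi> \<in> couplings \<mu> \<nu> \<Longrightarrow> c \<le> off \<pi>) \<Longrightarrow> c \<le> cc \<mu> \<nu>"
  unfolding cc_def using pair_coupling by (intro cINF_greatest) auto

lemma cc_bounds: "0 \<le> cc \<mu> \<nu>" "cc \<mu> \<nu> \<le> 1"
  using cc_ge[of \<mu> \<nu> 0] off_bounds apply force
  by (meson order_trans cc_le pair_coupling off_bounds(2))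

lemma FF_inj: assumes "p > 0" "0 \<le> a" "0 \<le> b" "FF p a = FF p b" shows "a = b"
proof (cases "p \<ge> 1")
  case True
  then have "a powr (1/p) = b powr (1/p)" using assms by (simp add: FF_def)
  then have "(a powr (1/p)) powr p = (b powr (1/p)) powr p" by simp
  then show ?thesis using assms by (simp add: powr_powr)
next
  case False
  then show ?thesis using assms by (simp add: FF_def)
qed

lemma FF_one: "FF p 1 = 1" by (simp add: FF_def)

lemma set_coupling: assumes "\<pi> \<in> couplings \<mu> \<nu>" "q \<in> set_pmf \<pi>"
  shows "fst q \<in> set_pmf \<mu>" "snd q \<in> set_pmf \<nu>"
proof -
  from assms(1) have "\<mu> = map_pmf fst \<pi>" "\<nu> = map_pmf snd \<pi>"
    by (auto simp: couplings_def)
  then have "set_pmf \<mu> = fst ` set_pmf \<pi>" "set_pmf \<nu> = snd ` set_pmf \<pi>"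
    by simp_all
  then show "fst q \<in> set_pmf \<mu>" "snd q \<in> set_pmf \<nu>" using assms(2) by auto
qed

lemma D1: "cc (return_pmf x) \<mu> = 1 - pmf \<mu> x"
proof -
  have key: "off \<pi> = 1 - pmf \<mu> x" if "\<pi> \<in> couplings (return_pmf x) \<mu>" for \<pi>
  proof -
    have "{q. fst q \<noteq> snd q} \<inter> set_pmf \<pi> = (snd -` (-{x})) \<inter> set_pmf \<pi>"
      using set_coupling(1)[OF that] by auto
    then have "off \<pi> = measure_pmf.prob \<pi> (snd -` (-{x}))"
      unfolding off_def by (metis measure_Int_set_pmf)
    also have "\<dots> = measure_pmf.prob (map_pmf snd \<pi>) (-{x})"
      by (simp add: measure_map_pmf)
    also have "map_pmf snd \<pi> = \<mu>" using that by (simp add: couplings_def)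
    also have "measure_pmf.prob \<mu> (-{x}) = 1 - pmf \<mu> x"
      by (simp add: prob_compl_single)
    finally show ?thesis .
  qed
  show ?thesis
    using cc_le[OF pair_coupling, of "return_pmf x" \<mu>] key[OF pair_coupling]
      cc_ge[of "return_pmf x" \<mu> "1 - pmf \<mu> x"] key by force
qed

lemma D2: "cc \<mu> \<nu> = 1 \<longleftrightarrow> set_pmf \<mu> \<inter> set_pmf \<nu> = {}"
proof
  assume "set_pmf \<mu> \<inter> set_pmf \<nu> = {}"
  have "1 \<le> off \<pi>" if "\<pi> \<in> couplings \<mu> \<nu>" for \<pi>
  proof -
    have "{q. fst q \<noteq> snd q} \<inter> set_pmf \<pi> = UNIV \<inter> set_pmf \<pi>"
      using set_coupling[OF that] \<open>set_pmf \<mu> \<inter> set_pmf \<nu> = {}\<close>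
      by (auto, metis disjoint_iff fst_conv snd_conv)
    then have "off \<pi> = measure_pmf.prob \<pi> UNIV"
      unfolding off_def by (metis measure_Int_set_pmf)
    then show ?thesis by simp
  qed
  then show "cc \<mu> \<nu> = 1" using cc_ge[of \<mu> \<nu> 1] cc_bounds[of \<mu> \<nu>] by force
next
  assume c1: "cc \<mu> \<nu> = 1"
  show "set_pmf \<mu> \<inter> set_pmf \<nu> = {}"
  proof (rule ccontr)
    assume "set_pmf \<mu> \<inter> set_pmf \<nu> \<noteq> {}"
    then obtain z where z: "z \<in> set_pmf \<mu>" "z \<in> set_pmf \<nu>" by auto
    let ?\<pi> = "pair_pmf \<mu> \<nu>"
    have "{q. fst q \<noteq> snd q} \<subseteq> -{(z,z)}" by auto
    then have "off ?\<pi> \<le> measure_pmf.prob ?\<pi> (-{(z,z)})"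
      unfolding off_def by (intro measure_pmf.finite_measure_mono) auto
    also have "\<dots> = 1 - pmf \<mu> z * pmf \<nu> z"
      by (simp add: prob_compl_single pmf_pair)
    also have "\<dots> < 1" using z by (simp add: set_pmf_iff pmf_nonneg order.strict_iff_order)
    finally show False using cc_le[OF pair_coupling, of \<mu> \<nu>] c1 by simp
  qed
qed

lemma cc_map: assumes "bij \<sigma>" shows "cc (map_pmf \<sigma> \<mu>) (map_pmf \<sigma> \<nu>) = cc \<mu> \<nu>"
proof -
  let ?m = "map_pmf (map_prod \<sigma> \<sigma>)"
  have inj: "inj \<sigma>" using assms bij_is_inj by blast
  have img: "couplings (map_pmf \<sigma> \<mu>) (map_pmf \<sigma> \<nu>) = ?m ` couplings \<mu> \<nu>"
  proof (intro equalityI subsetI)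
    fix \<pi>' assume h: "\<pi>' \<in> couplings (map_pmf \<sigma> \<mu>) (map_pmf \<sigma> \<nu>)"
    let ?\<pi> = "map_pmf (map_prod (inv \<sigma>) (inv \<sigma>)) \<pi>'"
    have i1: "inv \<sigma> \<circ> \<sigma> = id" using inj by (simp add: inv_o_cancel)
    have i2: "\<sigma> \<circ> inv \<sigma> = id" using assms by (meson bij_is_surj surj_iff)
    have "?m ?\<pi> = \<pi>'" by (simp add: pmf.map_comp map_prod.comp i2 map_prod.id pmf.map_id)
    have "map_pmf fst ?\<pi> = map_pmf (inv \<sigma>) (map_pmf fst \<pi>')"
      "map_pmf snd ?\<pi> = map_pmf (inv \<sigma>) (map_pmf snd \<pi>')"
      by (simp_all add: pmf.map_comp o_def)
    moreover have "map_pmf (inv \<sigma>) (map_pmf \<sigma> \<rho>) = \<rho>" for \<rho>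
      by (simp add: pmf.map_comp i1 pmf.map_id)
    ultimately have "?\<pi> \<in> couplings \<mu> \<nu>"
      using h by (simp add: couplings_def)
    moreover note \<open>?m ?\<pi> = \<pi>'\<close>
    ultimately show "\<pi>' \<in> ?m ` couplings \<mu> \<nu>" by force
  next
    fix \<pi>' assume "\<pi>' \<in> ?m ` couplings \<mu> \<nu>"
    then obtain \<pi> where "\<pi> \<in> couplings \<mu> \<nu>" "\<pi>' = ?m \<pi>" by auto
    then show "\<pi>' \<in> couplings (map_pmf \<sigma> \<mu>) (map_pmf \<sigma> \<nu>)"
      by (auto simp: couplings_def pmf.map_comp o_def)
  qed
  have offm: "off (?m \<pi>) = off \<pi>" for \<pi>
  proof -
    have "map_prod \<sigma> \<sigma> -` {q. fst q \<noteq> snd q} = {q. fst q \<noteq> snd q}"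
      using inj by (auto simp: inj_eq)
    then show ?thesis by (simp add: off_def measure_map_pmf)
  qed
  show ?thesis unfolding cc_def img image_comp o_def offm ..
qed


lemma dirac_to_dirac:
  assumes bf: "bij f" and iso: "\<And>\<mu> \<nu>. cc (f \<mu>) (f \<nu>) = cc \<mu> \<nu>"
  shows "\<exists>y. f (return_pmf x) = return_pmf y"
proof -
  let ?g = "inv f"
  have fg: "f (?g l) = l" for l using bf by (simp add: bij_is_surj surj_f_inv_f)
  obtain y where y: "y \<in> set_pmf (f (return_pmf x))" using set_pmf_not_empty by fastforce
  let ?\<rho> = "?g (return_pmf y)"
  have "set_pmf ?\<rho> \<subseteq> {x}"
  proof
    fix z assume z: "z \<in> set_pmf ?\<rho>"
    show "z \<in> {x}"
    proof (rule ccontr)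
      assume "z \<notin> {x}"
      then have "cc (return_pmf x) (return_pmf z) = 1" by (simp add: D2)
      then have "cc (f (return_pmf x)) (f (return_pmf z)) = 1" by (simp add: iso)
      then have "set_pmf (f (return_pmf x)) \<inter> set_pmf (f (return_pmf z)) = {}" by (simp add: D2)
      then have "y \<notin> set_pmf (f (return_pmf z))" using y by auto
      then have "cc (return_pmf y) (f (return_pmf z)) = 1" by (simp add: D2)
      then have "cc (f ?\<rho>) (f (return_pmf z)) = 1" by (simp add: fg)
      then have "cc ?\<rho> (return_pmf z) = 1" by (simp add: iso)
      then show False using z by (simp add: D2)
    qed
  qed
  then have "?\<rho> = return_pmf x" by (simp add: set_pmf_subset_singleton)
  then have "f (return_pmf x) = return_pmf y" by (metis fg)
  then show ?thesis by blast
qed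

theorem corollary2p2:
  fixes p :: real and f :: "'a::countable pmf \<Rightarrow> 'a pmf"
  assumes two: "\<exists>x y :: 'a. x \<noteq> y"
    and p: "p > 0"
  shows "((bij f \<and> (\<forall>\<mu> \<nu>. Wp p (f \<mu>) (f \<nu>) = Wp p \<mu> \<nu>)) \<longrightarrow>
           (\<exists>\<sigma> :: 'a \<Rightarrow> 'a. bij \<sigma> \<and> (\<forall>\<mu> x. pmf (f \<mu>) x = pmf \<mu> (inv \<sigma> x)))) \<and>
         (\<forall>\<sigma> :: 'a \<Rightarrow> 'a. bij \<sigma> \<longrightarrow>
           ((\<exists>g :: 'a pmf \<Rightarrow> 'a pmf. \<forall>\<mu> x. pmf (g \<mu>) x = pmf \<mu> (inv \<sigma> x)) \<and>
            (\<forall>g :: 'a pmf \<Rightarrow> 'a pmf. (\<forall>\<mu> x. pmf (g \<mu>) x = pmf \<mu> (inv \<sigma> x)) \<longrightarrow>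
               (\<forall>\<mu> \<nu>. Wp p (g \<mu>) (g \<nu>) = Wp p \<mu> \<nu>))))"
proof (intro conjI impI allI)
  assume h: "bij f \<and> (\<forall>\<mu> \<nu>. Wp p (f \<mu>) (f \<nu>) = Wp p \<mu> \<nu>)"
  then have bf: "bij f" by blast
  have iso: "cc (f \<mu>) (f \<nu>) = cc \<mu> \<nu>" for \<mu> \<nu>
  proof -
    have "FF p (cc (f \<mu>) (f \<nu>)) = FF p (cc \<mu> \<nu>)" using h p by (simp add: Wp_eq)
    then show ?thesis by (rule FF_inj[OF p cc_bounds(1) cc_bounds(1)])
  qed
  let ?g = "inv f"
  have fg: "f (?g l) = l" for l using bf by (simp add: bij_is_surj surj_f_inv_f)
  have bg: "bij ?g" using bf by (simp add: bij_imp_bij_inv)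
  have isog: "cc (?g \<mu>) (?g \<nu>) = cc \<mu> \<nu>" for \<mu> \<nu>
    by (metis iso fg)
  define \<sigma> where "\<sigma> x = (SOME y. f (return_pmf x) = return_pmf y)" for x
  have fs: "f (return_pmf x) = return_pmf (\<sigma> x)" for x
    unfolding \<sigma>_def using dirac_to_dirac[OF bf iso, of x] by (rule someI_ex)
  have "inj \<sigma>"
  proof (rule injI)
    fix a b assume "\<sigma> a = \<sigma> b"
    then have "f (return_pmf a) = f (return_pmf b)" by (simp add: fs)
    then show "a = b" using bf by (simp add: bij_is_inj inj_eq)
  qed
  moreover have "surj \<sigma>"
  proof -
    have "y \<in> range \<sigma>" for y
    proof -
      obtain x where "?g (return_pmf y) = return_pmf x" using dirac_to_dirac[OF bg isog, of y] by blast
      then have "f (return_pmf x) = return_pmf y" by (metis fg)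
      then have "\<sigma> x = y" by (simp add: fs)
      then show ?thesis by blast
    qed
    then show ?thesis by blast
  qed
  ultimately have bs: "bij \<sigma>" by (simp add: bij_def)
  have "pmf (f \<mu>) y = pmf \<mu> (inv \<sigma> y)" for \<mu> y
  proof -
    let ?x = "inv \<sigma> y"
    have sx: "\<sigma> ?x = y" using bs by (simp add: bij_is_surj surj_f_inv_f)
    have "cc (return_pmf y) (f \<mu>) = cc (return_pmf ?x) \<mu>" using iso fs sx by metis
    then show ?thesis by (simp add: D1)
  qed
  then show "\<exists>\<sigma> :: 'a \<Rightarrow> 'a. bij \<sigma> \<and> (\<forall>\<mu> x. pmf (f \<mu>) x = pmf \<mu> (inv \<sigma> x))"
    using bs by blast
next
  fix \<sigma> :: "'a \<Rightarrow> 'a" assume bs: "bij \<sigma>"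
  have pm: "pmf (map_pmf \<sigma> \<mu>) x = pmf \<mu> (inv \<sigma> x)" for \<mu> x
  proof -
    have "x = \<sigma> (inv \<sigma> x)" using bs by (simp add: bij_is_surj surj_f_inv_f)
    then have "pmf (map_pmf \<sigma> \<mu>) x = pmf (map_pmf \<sigma> \<mu>) (\<sigma> (inv \<sigma> x))" by simp
    also have "\<dots> = pmf \<mu> (inv \<sigma> x)" using bs by (simp add: bij_is_inj pmf_map_inj')
    finally show ?thesis .
  qed
  then show "\<exists>g :: 'a pmf \<Rightarrow> 'a pmf. \<forall>\<mu> x. pmf (g \<mu>) x = pmf \<mu> (inv \<sigma> x)" by blast
  fix g :: "'a pmf \<Rightarrow> 'a pmf" and \<mu> \<nu> :: "'a pmf"
  assume hg: "\<forall>\<mu> x. pmf (g \<mu>) x = pmf \<mu> (inv \<sigma> x)"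
  have "g \<rho> = map_pmf \<sigma> \<rho>" for \<rho> by (rule pmf_eqI) (simp add: hg pm)
  then show "Wp p (g \<mu>) (g \<nu>) = Wp p \<mu> \<nu>" using p bs by (simp add: Wp_eq cc_map)
qed

end
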